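(* Let $n\ge3$ and $\beta=\frac n{n-2}$. For every $x\ge0$ the infinite product $\prod_{i=0}^\infty\left(1+\frac{\beta^i}{\sqrt{2\beta^i-1}}x\right)^{\beta^{-i}}$ converges, defining a continuous function $\xi(x)$ on $[0,\infty)$, and $$\xi(x)\le e^{\frac n2\cdot\frac x{1+x}}(1+x)^{n/2}\quad\text{for all }x\ge0.$$ *)

theory Defs
  imports "HOL-Analysis.Analysis"
begin

end

theory Submission
  imports Defs
begin

lemma main_gen:
  fixes b :: real
  assumes b: "b > 1"
  shows "(\<forall>x\<ge>0. convergent_prod (\<lambda>i. (1 + b ^ i / sqrt (2 * b ^ i - 1) * x) powr (1 / b ^ i)))
         \<and> continuous_on {0..} (\<lambda>x::real. \<Prod>i. (1 + b ^ i / sqrt (2 * b ^ i - 1) * x) powr (1 / b ^ i))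
         \<and> (\<forall>x\<ge>0. (\<Prod>i. (1 + b ^ i / sqrt (2 * b ^ i - 1) * x) powr (1 / b ^ i))
               \<le> exp (b / (b - 1) * (x / (1 + x))) * (1 + x) powr (b / (b - 1)))"
proof -
  define c where "c i = b ^ i / sqrt (2 * b ^ i - 1)" for i :: nat
  define q where "q = sqrt (1 / b)"
  define u where "u x i = ln (1 + c i * x) / b ^ i" for x :: real and i :: nat
  have bi: "b ^ i \<ge> 1" for i using b by (simp add: one_le_power)
  have c0: "c i \<ge> 0" for i using bi[of i] unfolding c_def by (intro divide_nonneg_nonneg) auto
  have q0: "0 < q" using b by (simp add: q_def)
  have q1: "q < 1" using b by (simp add: q_def)
  have cq: "c i / b ^ i \<le> q ^ i" for i
  proof -
    have "c i / b ^ i = 1 / sqrt (2 * b ^ i - 1)" using bi[of i] b by (simp add: c_def)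
    also have "\<dots> \<le> 1 / sqrt (b ^ i)"
      using bi[of i] by (intro divide_left_mono) auto
    also have "\<dots> = q ^ i" by (simp add: q_def real_sqrt_power real_sqrt_divide power_one_over)
    finally show ?thesis .
  qed
  have sq: "summable (\<lambda>i. q ^ i)" using q0 q1 by (intro summable_geometric) auto
  have pos: "1 + c i * x > 0" if "x \<ge> 0" for x i using c0[of i] that by (simp add: add_pos_nonneg)
  have pos': "1 + c i * x \<noteq> 0" if "x \<ge> 0" for x i using pos[OF that, of i] by linarith
  have u0: "0 \<le> u x i" if "x \<ge> 0" for x i
    using c0[of i] that bi[of i] by (simp add: u_def)
  have ule: "u x i \<le> q ^ i * x" if "x \<ge> 0" for x i
  proof -
    have "ln (1 + c i * x) \<le> c i * x" using c0[of i] that by (intro ln_add_one_self_le_self) auto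
    hence "u x i \<le> c i * x / b ^ i" unfolding u_def using bi[of i]
      by (intro divide_right_mono) auto
    also have "\<dots> = (c i / b ^ i) * x" by simp
    also have "\<dots> \<le> q ^ i * x" using cq[of i] that by (intro mult_right_mono) auto
    finally show ?thesis .
  qed
  have su: "summable (u x)" if "x \<ge> 0" for x
  proof (rule summable_comparison_test)
    show "\<exists>N. \<forall>n\<ge>N. norm (u x n) \<le> q ^ n * x" using u0 ule that by auto
    show "summable (\<lambda>n. q ^ n * x)" using sq by (rule summable_mult2)
  qed
  have eqf: "(\<lambda>i. (1 + c i * x) powr (1 / b ^ i)) = (\<lambda>i. exp (u x i))" if "x \<ge> 0" for x
    using pos[OF that] by (intro ext) (auto simp: powr_def u_def dest: less_imp_neq[THEN not_sym])
  have conv: "convergent_prod (\<lambda>i. (1 + c i * x) powr (1 / b ^ i))" if "x \<ge> 0" for x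
    unfolding eqf[OF that] by (rule convergent_prod_exp[OF su[OF that]])
  have xieq: "(\<Prod>i. (1 + c i * x) powr (1 / b ^ i)) = exp (suminf (u x))" if "x \<ge> 0" for x
    unfolding eqf[OF that] by (rule prodinf_exp[OF su[OF that]])
  have contR: "continuous_on {0..R} (\<lambda>x. \<Prod>i. (1 + c i * x) powr (1 / b ^ i))" for R
  proof -
    have ul: "uniform_limit {0..R} (\<lambda>n x. \<Sum>i<n. u x i) (\<lambda>x. suminf (\<lambda>i. u x i)) sequentially"
    proof (rule Weierstrass_m_test)
      show "norm (u x n) \<le> q ^ n * R" if "x \<in> {0..R}" for n x
        using u0[of x n] ule[of x n] that q0
        by (auto intro: order.trans[OF _ mult_left_mono[of x R]])
      show "summable (\<lambda>n. q ^ n * R)" using sq by (rule summable_mult2)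
    qed
    have "continuous_on {0..R} (\<lambda>x. suminf (u x))"
    proof (rule uniform_limit_theorem[OF _ ul])
      show "\<forall>\<^sub>F n in sequentially. continuous_on {0..R} (\<lambda>x. \<Sum>i<n. u x i)"
        by (intro always_eventually allI continuous_intros)
           (use b in \<open>auto simp: u_def intro!: continuous_intros dest: pos'\<close>)
    qed auto
    hence "continuous_on {0..R} (\<lambda>x. exp (suminf (u x)))" by (intro continuous_intros)
    thus ?thesis by (rule continuous_on_cong[THEN iffD1, rotated 2]) (auto simp: xieq)
  qed
  have cont: "continuous_on {0..} (\<lambda>x. \<Prod>i. (1 + c i * x) powr (1 / b ^ i))"
    unfolding continuous_on_eq_continuous_within
  proof
    fix x :: real assume x: "x \<in> {0..}"
    have "continuous (at x within {0..x+1}) (\<lambda>x. \<Prod>i. (1 + c i * x) powr (1 / b ^ i))"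
      using contR[of "x+1"] x by (simp add: continuous_on_eq_continuous_within)
    moreover have "at x within {0..x+1} = at x within {0..}"
      by (rule at_within_nhd[where S="{..<x+1}"]) auto
    ultimately show "continuous (at x within {0..}) (\<lambda>x. \<Prod>i. (1 + c i * x) powr (1 / b ^ i))"
      by simp
  qed
  define B where "B = b / (b - 1)"
  have B: "1 / (1 - 1 / b) = B" using b by (simp add: B_def field_simps)
  have qB: "1 / (1 - q) \<le> 2 * B"
  proof -
    have qq: "q * q = 1 / b" using b by (simp add: q_def)
    have "1 - 1 / b = (1 - q) * (1 + q)" using qq by (simp add: algebra_simps)
    hence "1 / (1 - q) = (1 + q) / (1 - 1 / b)" using q1 q0 b by (simp add: field_simps)
    also have "\<dots> \<le> 2 / (1 - 1 / b)" using q1 b by (intro divide_right_mono) auto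
    also have "\<dots> = 2 * B" by (subst B[symmetric]) simp
    finally show ?thesis .
  qed
  have bound: "(\<Prod>i. (1 + c i * x) powr (1 / b ^ i)) \<le> exp (B * (x / (1 + x))) * (1 + x) powr B"
    if x: "x \<ge> 0" for x
  proof -
    define t where "t = x / (1 + x)"
    define L where "L = ln (1 + x)"
    have t0: "t \<ge> 0" using x by (simp add: t_def)
    have trm: "u x i \<le> (1 / b) ^ i * L + (q ^ i - (1 / b) ^ i) * t" for i
    proof -
      have "ln (1 + c i * x) - ln (1 + x) = ln ((1 + c i * x) / (1 + x))"
        using pos[OF x, of i] x by (simp add: ln_div)
      also have "\<dots> \<le> (1 + c i * x) / (1 + x) - 1"
        using pos[OF x, of i] x by (intro ln_le_minus_one) auto
      also have "\<dots> = (c i - 1) * t" using x by (simp add: t_def field_simps)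
      finally have h: "ln (1 + c i * x) \<le> L + (c i - 1) * t" by (simp add: L_def)
      have "u x i \<le> (L + (c i - 1) * t) / b ^ i"
        unfolding u_def using h bi[of i] by (intro divide_right_mono) auto
      also have "\<dots> = (1 / b) ^ i * L + (c i / b ^ i - (1 / b) ^ i) * t"
        using bi[of i] by (simp add: power_one_over add_divide_distrib diff_divide_distrib algebra_simps)
      also have "\<dots> \<le> (1 / b) ^ i * L + (q ^ i - (1 / b) ^ i) * t"
        using cq[of i] t0 by (intro add_left_mono mult_right_mono) auto
      finally show ?thesis .
    qed
    have gb: "(\<lambda>i. (1 / b) ^ i) sums B" using geometric_sums[of "1/b"] b B by simp
    have gq: "(\<lambda>i. q ^ i) sums (1 / (1 - q))" using geometric_sums[of q] q0 q1 by simp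
    have s: "(\<lambda>i. (1 / b) ^ i * L + (q ^ i - (1 / b) ^ i) * t) sums (B * L + (1 / (1 - q) - B) * t)"
      by (intro sums_add sums_mult2 sums_diff gb gq)
    have "suminf (u x) \<le> B * L + (1 / (1 - q) - B) * t"
      by (rule sums_le[OF trm summable_sums[OF su[OF x]] s])
    also have "\<dots> \<le> B * t + B * L" using qB t0 by (smt (verit) mult_right_mono)
    finally have "exp (suminf (u x)) \<le> exp (B * t + B * L)" by simp
    also have "\<dots> = exp (B * t) * (1 + x) powr B"
      using x by (simp add: exp_add powr_def L_def mult.commute)
    finally show ?thesis using xieq[OF x] by (simp add: t_def)
  qed
  show ?thesis using conv cont bound unfolding c_def B_def by blast
qed

theorem lemmaB1:
  fixes n :: nat
  assumes "n \<ge> 3"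
  defines "\<beta> \<equiv> real n / (real n - 2)"
  defines "\<xi> \<equiv> \<lambda>x::real. \<Prod>i. (1 + \<beta> ^ i / sqrt (2 * \<beta> ^ i - 1) * x) powr (1 / \<beta> ^ i)"
  shows "(\<forall>x\<ge>0. convergent_prod (\<lambda>i. (1 + \<beta> ^ i / sqrt (2 * \<beta> ^ i - 1) * x) powr (1 / \<beta> ^ i)))
         \<and> continuous_on {0..} \<xi>
         \<and> (\<forall>x\<ge>0. \<xi> x \<le> exp (real n / 2 * (x / (1 + x))) * (1 + x) powr (real n / 2))"
proof -
  have b1: "\<beta> > 1" using assms(1) by (simp add: \<beta>_def field_simps)
  have B: "\<beta> / (\<beta> - 1) = real n / 2" using assms(1) by (simp add: \<beta>_def field_simps)
  show ?thesis using main_gen[OF b1] unfolding B \<xi>_def by simp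
qed

end
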